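(* For any smooth function $\Theta$ and integer $j\geq 2$, the following estimate holds: \begin{align*} \|\Theta\|_{H^{j}(\Omega_{t})}&\lesssim \|\Theta\|_{H^{j-1}(\Omega_t)}+\|\nabla^{(j-2)}{\overline A}\Theta\|_{L^2(\Omega_t)}+\|[{\overline A},\nabla^{(j-2)}]\Theta\|_{L^2(\Omega_t)}\\ &\quad+\|[\nabla^{\top},\nabla^{(j-2)}]\Theta\|_{H^1(\Omega_t)}+\|\nabla^{\top}\Theta\|_{H^{j-1}(\Omega_t)}, \end{align*} where $\nabla^{\top}=(\nabla^{\top}_1,\nabla^{\top}_2,\nabla^{\top}_3)$ denotes the tangential derivatives $\nabla^{\top}_{i}:=\partial_{i}-{\underline n}_{i}{\underline n}^{j}\partial_{j}$.
   Context: Setting: Minkowski space with coordinates $(x^0,x^1,x^2,x^3)$, fluid slices $\Omega_t\subset\mathbb R^3$ with boundary $\partial\Omega_t$. ${\overline V}=c^{-1}V$ is a future-directed timelike vectorfield and $\overline{\sigma}^2=c^{-2}\sigma^2-c^2$, with $\overline\sigma^2$ constant on $\partial\Omega_t$ and $\nabla\overline\sigma^2\neq0$ there. ${\overline A}:={\overline a}^{ij}\partial^2_{ij}$ with ${\overline a}^{ij}=(m^{-1})^{ij}-\frac{{\overline V}^i}{{\overline V}^0}\frac{{\overline V}^j}{{\overline V}^0}$, an elliptic operator on $\Omega_t$. Here $\nabla_i=\partial_i$ ($i=1,2,3$) are spatial derivatives, $\nabla^{(k)}$ denotes $k$ spatial derivatives, ${\underline n}:=\frac{(\partial_{1}\overline{\sigma}^{2},\partial_{2}\overline{\sigma}^{2},\partial_{3}\overline{\sigma}^{2})}{\sqrt{\sum_{i=1}^{3}(\partial_{i}\overline{\sigma}^{2})^{2}}}$,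 ${\underline n}_i=\delta_{ij}{\underline n}^j$; the operators $\nabla^{\top}_i$ are globally defined, tangential to $\partial\Omega_t$ and span $T\partial\Omega_t$. Implicit constants depend on $\Omega_t$. *)

theory Defs
  imports "HOL-Analysis.Analysis"
begin

definition pd :: "3 \<Rightarrow> (real^3 \<Rightarrow> real) \<Rightarrow> real^3 \<Rightarrow> real" where
  "pd i f = (\<lambda>x. frechet_derivative f (at x) (axis i 1))"

fun dpar :: "3 list \<Rightarrow> (real^3 \<Rightarrow> real) \<Rightarrow> real^3 \<Rightarrow> real" where
  "dpar [] f = f"
| "dpar (i # is) f = pd i (dpar is f)"

definition smooth_fun :: "(real^3 \<Rightarrow> real) \<Rightarrow> bool" where
  "smooth_fun f \<longleftrightarrow> (\<forall>is x. dpar is f differentiable (at x))"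

definition sob_norm :: "nat \<Rightarrow> (real^3) set \<Rightarrow> (real^3 \<Rightarrow> real) \<Rightarrow> real" where
  "sob_norm k \<Omega> f =
     sqrt (\<Sum>m\<le>k. \<Sum>is\<in>{is::3 list. length is = m}. integral \<Omega> (\<lambda>x. (dpar is f x)^2))"

text \<open>H^k norm of a tensor-valued quantity with components F a, a in I.\<close>
definition fam_norm :: "nat \<Rightarrow> (real^3) set \<Rightarrow> ('a \<Rightarrow> real^3 \<Rightarrow> real) \<Rightarrow> 'a set \<Rightarrow> real" where
  "fam_norm k \<Omega> F I = sqrt (\<Sum>a\<in>I. (sob_norm k \<Omega> (F a))^2)"

text \<open>Coefficients abar^{ij} = (m^{-1})^{ij} - Vbar^i Vbar^j / (Vbar^0)^2, m = diag(-1,1,1,1);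
  V0 is the time component of Vbar and Vs its spatial part.\<close>
definition abar :: "(real^3 \<Rightarrow> real) \<Rightarrow> (real^3 \<Rightarrow> real^3) \<Rightarrow> 3 \<Rightarrow> 3 \<Rightarrow> real^3 \<Rightarrow> real" where
  "abar V0 Vs i j x = (if i = j then 1 else 0) - (Vs x $ i / V0 x) * (Vs x $ j / V0 x)"

definition Aop :: "(real^3 \<Rightarrow> real) \<Rightarrow> (real^3 \<Rightarrow> real^3) \<Rightarrow> (real^3 \<Rightarrow> real) \<Rightarrow> real^3 \<Rightarrow> real" where
  "Aop V0 Vs f x = (\<Sum>i\<in>UNIV. \<Sum>j\<in>UNIV. abar V0 Vs i j x * dpar [i, j] f x)"

definition grad :: "(real^3 \<Rightarrow> real) \<Rightarrow> real^3 \<Rightarrow> real^3" where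
  "grad f x = (\<chi> i. pd i f x)"

definition nunder :: "(real^3 \<Rightarrow> real) \<Rightarrow> real^3 \<Rightarrow> real^3" where
  "nunder s x = (1 / norm (grad s x)) *\<^sub>R grad s x"

definition tan_d :: "(real^3 \<Rightarrow> real^3) \<Rightarrow> 3 \<Rightarrow> (real^3 \<Rightarrow> real) \<Rightarrow> real^3 \<Rightarrow> real" where
  "tan_d n i f x = pd i f x - n x $ i * (\<Sum>j\<in>UNIV. n x $ j * pd j f x)"

end

theory Submission
  imports Defs
begin

lemma pd_eq: "(f has_derivative f') (at x) \<Longrightarrow> pd i f x = f' (axis i 1)"
  by (metis frechet_derivative_at pd_def)

lemma dpar_append: "dpar (xs @ ys) f = dpar xs (dpar ys f)"
  by (induction xs) auto

definition smooth_on :: "(real^3) set \<Rightarrow> (real^3 \<Rightarrow> real) \<Rightarrow> bool" where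
  "smooth_on U f \<longleftrightarrow> (\<forall>is. \<forall>x\<in>U. dpar is f differentiable (at x))"

lemma smooth_on_coind:
  assumes step: "\<And>f. P f \<Longrightarrow> (\<forall>x\<in>U. f differentiable (at x)) \<and> (\<forall>i. P (pd i f))"
    and "P f"
  shows "smooth_on U f"
proof -
  have "\<forall>f. P f \<longrightarrow> (\<forall>x\<in>U. dpar is f differentiable (at x))" for "is"
  proof (induction "is" rule: rev_induct)
    case Nil
    then show ?case using step by auto
  next
    case (snoc i "is")
    then show ?case using step by (auto simp: dpar_append)
  qed
  then show ?thesis using assms(2) by (auto simp: smooth_on_def)
qed

lemma smooth_on_fun: "smooth_fun f \<Longrightarrow> smooth_on U f"
  by (auto simp: smooth_fun_def smooth_on_def)

lemma smooth_on_diff: "smooth_on U f \<Longrightarrow> x \<in> U \<Longrightarrow> f differentiable (at x)"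
  unfolding smooth_on_def by (metis dpar.simps(1))

lemma smooth_on_pd: "smooth_on U f \<Longrightarrow> smooth_on U (pd i f)"
  unfolding smooth_on_def by (metis append_Cons append_Nil dpar.simps dpar_append)

lemma smooth_on_dpar: "smooth_on U f \<Longrightarrow> smooth_on U (dpar is f)"
  unfolding smooth_on_def by (metis dpar_append)

lemma pd_local:
  assumes "open U" "x \<in> U" "\<And>y. y \<in> U \<Longrightarrow> f y = g y" "f differentiable (at x)"
  shows "pd i f x = pd i g x"
  unfolding pd_def using frechet_derivative_transform_within_open[OF assms(4,1,2)] assms(3) by metis

lemma diff_local:
  assumes "open U" "x \<in> U" "\<And>y. y \<in> U \<Longrightarrow> f y = g y" "f differentiable (at x)"
  shows "g differentiable (at x)"
  using assms unfolding differentiable_def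
  by (meson has_derivative_transform_within_open)

lemma dpar_local:
  assumes "open U" "smooth_on U f" "\<And>y. y \<in> U \<Longrightarrow> f y = g y"
  shows "y \<in> U \<Longrightarrow> dpar is f y = dpar is g y"
proof (induction "is" arbitrary: y)
  case Nil
  then show ?case using assms by simp
next
  case (Cons i "is")
  have "pd i (dpar is f) y = pd i (dpar is g) y"
    by (rule pd_local[OF assms(1) Cons.prems]) (use Cons assms(2) smooth_on_def in auto)
  then show ?case by simp
qed

lemma smooth_on_cong:
  assumes "open U" "smooth_on U f" "\<And>y. y \<in> U \<Longrightarrow> f y = g y"
  shows "smooth_on U g"
  unfolding smooth_on_def
proof (intro allI ballI)
  fix "is" x assume x: "x \<in> U"
  show "dpar is g differentiable (at x)"
    by (rule diff_local[OF assms(1) x, of "dpar is f"]) (use dpar_local[OF assms] assms(2) x smooth_on_def in auto)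
qed

lemma pd_add:
  assumes "f differentiable (at x)" "g differentiable (at x)"
  shows "pd i (\<lambda>y. f y + g y) x = pd i f x + pd i g x"
proof -
  obtain f' g' where f': "(f has_derivative f') (at x)" and g': "(g has_derivative g') (at x)"
    using assms unfolding differentiable_def by blast
  show ?thesis using pd_eq[OF has_derivative_add[OF f' g']] pd_eq[OF f'] pd_eq[OF g'] by simp
qed

lemma pd_mult:
  assumes "f differentiable (at x)" "g differentiable (at x)"
  shows "pd i (\<lambda>y. f y * g y) x = pd i f x * g x + f x * pd i g x"
proof -
  obtain f' g' where f': "(f has_derivative f') (at x)" and g': "(g has_derivative g') (at x)"
    using assms unfolding differentiable_def by blast
  show ?thesis using pd_eq[OF has_derivative_mult[OF f' g']] pd_eq[OF f'] pd_eq[OF g'] by simp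
qed

lemma pd_const: "pd i (\<lambda>y. c) x = 0"
  using pd_eq[OF has_derivative_const] by simp

lemma pd_inverse:
  assumes "f differentiable (at x)" "f x \<noteq> 0"
  shows "pd i (\<lambda>y. inverse (f y)) x = - (inverse (f x) * pd i f x * inverse (f x))"
proof -
  obtain f' where f': "(f has_derivative f') (at x)"
    using assms unfolding differentiable_def by blast
  show ?thesis using pd_eq[OF Deriv.has_derivative_inverse[OF assms(2) f']] pd_eq[OF f'] by simp
qed

lemma smooth_on_const: "smooth_on U (\<lambda>x. c)"
  by (rule smooth_on_coind[where P="\<lambda>f. \<exists>c. f = (\<lambda>x. c)"]) (auto simp: pd_const[abs_def])

inductive_set Rg :: "(real^3 \<Rightarrow> real) \<Rightarrow> (real^3) set \<Rightarrow> (real^3 \<Rightarrow> real) set"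
  for V0 U where
  sm: "smooth_on U f \<Longrightarrow> f \<in> Rg V0 U"
| add: "f \<in> Rg V0 U \<Longrightarrow> g \<in> Rg V0 U \<Longrightarrow> (\<lambda>x. f x + g x) \<in> Rg V0 U"
| mul: "f \<in> Rg V0 U \<Longrightarrow> g \<in> Rg V0 U \<Longrightarrow> (\<lambda>x. f x * g x) \<in> Rg V0 U"
| inv: "(\<lambda>x. inverse (V0 x)) \<in> Rg V0 U"

lemma Rg_step:
  assumes U: "open U" and V: "smooth_on U V0" "\<forall>x\<in>U. V0 x \<noteq> 0"
  shows "h \<in> Rg V0 U \<Longrightarrow> (\<forall>x\<in>U. h differentiable (at x)) \<and> (\<forall>i. \<exists>g\<in>Rg V0 U. \<forall>x\<in>U. pd i h x = g x)"
proof (induction rule: Rg.induct)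
  case (sm f)
  then show ?case using smooth_on_diff smooth_on_pd Rg.sm by blast
next
  case (add f g)
  show ?case
  proof (intro conjI allI)
    show "\<forall>x\<in>U. (\<lambda>x. f x + g x) differentiable at x" using add by auto
    fix i
    obtain f' g' where "f' \<in> Rg V0 U" "g' \<in> Rg V0 U" "\<forall>x\<in>U. pd i f x = f' x" "\<forall>x\<in>U. pd i g x = g' x"
      using add by meson
    then show "\<exists>h\<in>Rg V0 U. \<forall>x\<in>U. pd i (\<lambda>x. f x + g x) x = h x"
      using add by (intro bexI[of _ "\<lambda>x. f' x + g' x"]) (auto simp: pd_add intro: Rg.add)
  qed
next
  case (mul f g)
  show ?case
  proof (intro conjI allI)
    show "\<forall>x\<in>U. (\<lambda>x. f x * g x) differentiable at x" using mul by auto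
    fix i
    obtain f' g' where "f' \<in> Rg V0 U" "g' \<in> Rg V0 U" "\<forall>x\<in>U. pd i f x = f' x" "\<forall>x\<in>U. pd i g x = g' x"
      using mul by meson
    then show "\<exists>h\<in>Rg V0 U. \<forall>x\<in>U. pd i (\<lambda>x. f x * g x) x = h x"
      using mul by (intro bexI[of _ "\<lambda>x. f' x * g x + f x * g' x"]) (auto simp: pd_mult intro: Rg.add Rg.mul)
  qed
next
  case inv
  show ?case
  proof (intro conjI allI)
    show "\<forall>x\<in>U. (\<lambda>x. inverse (V0 x)) differentiable at x"
      using V smooth_on_diff by (auto intro!: derivative_intros)
    fix i
    have "(\<lambda>x. - 1 * (inverse (V0 x) * pd i V0 x * inverse (V0 x))) \<in> Rg V0 U"
      by (intro Rg.mul Rg.sm Rg.inv smooth_on_const smooth_on_pd V)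
    then show "\<exists>h\<in>Rg V0 U. \<forall>x\<in>U. pd i (\<lambda>x. inverse (V0 x)) x = h x"
      using V smooth_on_diff by (intro bexI) (auto simp: pd_inverse)
  qed
qed

lemma Rg_smooth:
  assumes U: "open U" and V: "smooth_on U V0" "\<forall>x\<in>U. V0 x \<noteq> 0" and h: "h \<in> Rg V0 U"
  shows "smooth_on U h"
proof (rule smooth_on_coind[where P="\<lambda>h. \<exists>g\<in>Rg V0 U. \<forall>x\<in>U. h x = g x"])
  fix f assume "\<exists>g\<in>Rg V0 U. \<forall>x\<in>U. f x = g x"
  then obtain g where g: "g \<in> Rg V0 U" "\<forall>x\<in>U. f x = g x" by blast
  note st = Rg_step[OF U V g(1)]
  show "(\<forall>x\<in>U. f differentiable at x) \<and> (\<forall>i. \<exists>g\<in>Rg V0 U. \<forall>x\<in>U. pd i f x = g x)"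
  proof (intro conjI allI ballI)
    fix x assume x: "x \<in> U"
    show "f differentiable at x" using diff_local[OF U x, of g f] g st x by auto
  next
    fix i
    obtain g' where g': "g' \<in> Rg V0 U" "\<forall>x\<in>U. pd i g x = g' x" using st by blast
    have "\<forall>x\<in>U. pd i f x = g' x"
      using pd_local[OF U, of _ g f] g g' st by auto
    then show "\<exists>g\<in>Rg V0 U. \<forall>x\<in>U. pd i f x = g x" using g' by blast
  qed
qed (use h in auto)

lemma Rg_const: "(\<lambda>x. c) \<in> Rg V0 U"
  by (rule Rg.sm[OF smooth_on_const])

lemma Rg_diff: "f \<in> Rg V0 U \<Longrightarrow> g \<in> Rg V0 U \<Longrightarrow> (\<lambda>x. f x - g x) \<in> Rg V0 U"
proof -
  assume "f \<in> Rg V0 U" "g \<in> Rg V0 U"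
  then have "(\<lambda>x. f x + (-1) * g x) \<in> Rg V0 U" by (intro Rg.add Rg.mul Rg_const)
  then show ?thesis by simp
qed

lemma Rg_sum: "finite I \<Longrightarrow> (\<And>k. k \<in> I \<Longrightarrow> F k \<in> Rg V0 U) \<Longrightarrow> (\<lambda>x. \<Sum>k\<in>I. F k x) \<in> Rg V0 U"
proof (induction I rule: finite_induct)
  case empty
  then show ?case using Rg_const[of 0] by simp
next
  case (insert a I)
  then show ?case using Rg.add[of "F a" V0 U "\<lambda>x. \<Sum>k\<in>I. F k x"] by simp
qed

lemma line_deriv:
  assumes "g differentiable (at (y + s *\<^sub>R axis p 1))"
  shows "((\<lambda>s. g (y + s *\<^sub>R axis p 1)) has_real_derivative pd p g (y + s *\<^sub>R axis p 1)) (at s)"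
proof -
  let ?v = "axis p 1 :: real^3"
  obtain g' where g': "(g has_derivative g') (at (y + s *\<^sub>R ?v))"
    using assms unfolding differentiable_def by blast
  have l: "((\<lambda>s. y + s *\<^sub>R ?v) has_derivative (\<lambda>h. h *\<^sub>R ?v)) (at s)"
    by (auto intro!: derivative_eq_intros)
  have c: "((\<lambda>s. g (y + s *\<^sub>R ?v)) has_derivative (\<lambda>h. g' (h *\<^sub>R ?v))) (at s)"
    using has_derivative_compose[OF l g'] by (simp add: o_def)
  have "(\<lambda>h. g' (h *\<^sub>R ?v)) = (\<lambda>h. pd p g (y + s *\<^sub>R ?v) * h)"
    using pd_eq[OF g'] has_derivative_linear[OF g']
    by (auto simp: linear_cmul mult.commute)
  then show ?thesis using c unfolding has_field_derivative_def by simp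
qed

lemma mixed_mvt:
  assumes U: "open U" and f: "smooth_on U f" and h: "h > 0"
    and sub: "cball x (2*h) \<subseteq> U"
  shows "\<exists>s t. 0 < s \<and> s < h \<and> 0 < t \<and> t < h \<and>
     f (x + h *\<^sub>R axis q 1 + h *\<^sub>R axis p 1) - f (x + h *\<^sub>R axis p 1) - f (x + h *\<^sub>R axis q 1) + f x
       = h * h * pd q (pd p f) (x + s *\<^sub>R axis p 1 + t *\<^sub>R axis q 1)"
proof -
  let ?ep = "axis p 1 :: real^3" and ?eq = "axis q 1 :: real^3"
  have nax: "norm (axis i (1::real) :: real^3) = 1" for i by simp
  have inU: "x + s *\<^sub>R ?ep + t *\<^sub>R ?eq \<in> U" if "0 \<le> s" "s \<le> h" "0 \<le> t" "t \<le> h" for s t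
  proof -
    have "norm (s *\<^sub>R ?ep + t *\<^sub>R ?eq) \<le> norm (s *\<^sub>R ?ep) + norm (t *\<^sub>R ?eq)" by (rule norm_triangle_ineq)
    also have "\<dots> \<le> 2*h" using that by simp
    finally have "dist x (x + (s *\<^sub>R ?ep + t *\<^sub>R ?eq)) \<le> 2*h" by (metis add_diff_cancel_left' dist_commute dist_norm)
    then show ?thesis using sub by (auto simp: add.assoc)
  qed
  define \<phi> where "\<phi> s = f (x + h *\<^sub>R ?eq + s *\<^sub>R ?ep) - f (x + s *\<^sub>R ?ep)" for s
  have d\<phi>: "(\<phi> has_real_derivative (pd p f (x + h *\<^sub>R ?eq + s *\<^sub>R ?ep) - pd p f (x + s *\<^sub>R ?ep))) (at s)"
    if "0 \<le> s" "s \<le> h" for s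
  proof -
    have "x + h *\<^sub>R ?eq + s *\<^sub>R ?ep \<in> U" using inU[of s h] that h by (simp add: algebra_simps)
    moreover have "x + s *\<^sub>R ?ep \<in> U" using inU[of s 0] that h by simp
    ultimately show ?thesis unfolding \<phi>_def
      by (intro DERIV_diff line_deriv smooth_on_diff[OF f])
  qed
  obtain s where s: "0 < s" "s < h" and s_eq: "\<phi> h - \<phi> 0 = (h - 0) * (pd p f (x + h *\<^sub>R ?eq + s *\<^sub>R ?ep) - pd p f (x + s *\<^sub>R ?ep))"
    using MVT2[OF h, of \<phi> "\<lambda>s. pd p f (x + h *\<^sub>R ?eq + s *\<^sub>R ?ep) - pd p f (x + s *\<^sub>R ?ep)"] d\<phi> by auto
  define \<psi> where "\<psi> t = pd p f (x + s *\<^sub>R ?ep + t *\<^sub>R ?eq)" for t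
  have d\<psi>: "(\<psi> has_real_derivative pd q (pd p f) (x + s *\<^sub>R ?ep + t *\<^sub>R ?eq)) (at t)"
    if "0 \<le> t" "t \<le> h" for t
    unfolding \<psi>_def
    by (intro line_deriv smooth_on_diff[OF smooth_on_pd[OF f]] inU) (use that s in auto)
  obtain t where t: "0 < t" "t < h" and t_eq: "\<psi> h - \<psi> 0 = (h - 0) * pd q (pd p f) (x + s *\<^sub>R ?ep + t *\<^sub>R ?eq)"
    using MVT2[OF h, of \<psi> "\<lambda>t. pd q (pd p f) (x + s *\<^sub>R ?ep + t *\<^sub>R ?eq)"] d\<psi> by auto
  have "\<psi> h - \<psi> 0 = pd p f (x + h *\<^sub>R ?eq + s *\<^sub>R ?ep) - pd p f (x + s *\<^sub>R ?ep)"
    unfolding \<psi>_def by (simp add: algebra_simps)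
  then have "\<phi> h - \<phi> 0 = h * h * pd q (pd p f) (x + s *\<^sub>R ?ep + t *\<^sub>R ?eq)"
    using s_eq t_eq by simp
  moreover have "\<phi> h - \<phi> 0 = f (x + h *\<^sub>R ?eq + h *\<^sub>R ?ep) - f (x + h *\<^sub>R ?ep) - f (x + h *\<^sub>R ?eq) + f x"
    unfolding \<phi>_def by simp
  ultimately show ?thesis using s t by metis
qed

lemma schwarz:
  assumes U: "open U" and f: "smooth_on U f" and x: "x \<in> U"
  shows "pd p (pd q f) x = pd q (pd p f) x"
proof (rule ccontr)
  let ?F1 = "pd q (pd p f)" and ?F2 = "pd p (pd q f)"
  let ?a = "?F1 x" and ?b = "?F2 x"
  assume ne: "?b \<noteq> ?a"
  define \<epsilon> where "\<epsilon> = \<bar>?a - ?b\<bar> / 2"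
  have \<epsilon>: "\<epsilon> > 0" using ne by (simp add: \<epsilon>_def)
  have c1: "isCont ?F1 x" using smooth_on_diff[OF smooth_on_pd[OF smooth_on_pd[OF f]] x]
    by (simp add: differentiable_imp_continuous_within)
  have c2: "isCont ?F2 x" using smooth_on_diff[OF smooth_on_pd[OF smooth_on_pd[OF f]] x]
    by (simp add: differentiable_imp_continuous_within)
  obtain d1 where d1: "d1 > 0" "\<And>y. dist y x < d1 \<Longrightarrow> dist (?F1 y) ?a < \<epsilon>"
    using c1 \<epsilon> unfolding continuous_at_eps_delta by (metis dist_commute)
  obtain d2 where d2: "d2 > 0" "\<And>y. dist y x < d2 \<Longrightarrow> dist (?F2 y) ?b < \<epsilon>"
    using c2 \<epsilon> unfolding continuous_at_eps_delta by (metis dist_commute)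
  obtain d3 where d3: "d3 > 0" "ball x d3 \<subseteq> U" using U x open_contains_ball by blast
  define h where "h = min d1 (min d2 d3) / 3"
  have h: "h > 0" using d1 d2 d3 by (simp add: h_def)
  have sub: "cball x (2*h) \<subseteq> U" using d3 h by (auto simp: h_def)
  have nax: "norm (axis i (1::real) :: real^3) = 1" for i by simp
  have small: "dist (x + s *\<^sub>R axis i 1 + t *\<^sub>R axis k 1) x < min d1 (min d2 d3)"
    if "0 < s" "s < h" "0 < t" "t < h" for s t i k
  proof -
    have "norm (s *\<^sub>R axis i 1 + t *\<^sub>R axis k 1 :: real^3) \<le> norm (s *\<^sub>R axis i 1 :: real^3) + norm (t *\<^sub>R axis k 1 :: real^3)"
      by (rule norm_triangle_ineq)
    also have "\<dots> < 3 * h" using that by simp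
    finally show ?thesis by (simp add: dist_norm add.assoc h_def)
  qed
  obtain s t where st: "0 < s" "s < h" "0 < t" "t < h" and e1:
     "f (x + h *\<^sub>R axis q 1 + h *\<^sub>R axis p 1) - f (x + h *\<^sub>R axis p 1) - f (x + h *\<^sub>R axis q 1) + f x
       = h * h * ?F1 (x + s *\<^sub>R axis p 1 + t *\<^sub>R axis q 1)"
    using mixed_mvt[OF U f h sub, of q p] by blast
  obtain s' t' where st': "0 < s'" "s' < h" "0 < t'" "t' < h" and e2:
     "f (x + h *\<^sub>R axis p 1 + h *\<^sub>R axis q 1) - f (x + h *\<^sub>R axis q 1) - f (x + h *\<^sub>R axis p 1) + f x
       = h * h * ?F2 (x + s' *\<^sub>R axis q 1 + t' *\<^sub>R axis p 1)"
    using mixed_mvt[OF U f h sub, of p q] by blast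
  have "h * h * ?F1 (x + s *\<^sub>R axis p 1 + t *\<^sub>R axis q 1) = h * h * ?F2 (x + s' *\<^sub>R axis q 1 + t' *\<^sub>R axis p 1)"
    using e1 e2 by (simp add: algebra_simps)
  then have eq: "?F1 (x + s *\<^sub>R axis p 1 + t *\<^sub>R axis q 1) = ?F2 (x + s' *\<^sub>R axis q 1 + t' *\<^sub>R axis p 1)"
    using h by simp
  have A1: "\<bar>?F1 (x + s *\<^sub>R axis p 1 + t *\<^sub>R axis q 1) - ?a\<bar> < \<epsilon>"
    using d1(2) small[OF st] by (auto simp: dist_real_def)
  have A2: "\<bar>?F2 (x + s' *\<^sub>R axis q 1 + t' *\<^sub>R axis p 1) - ?b\<bar> < \<epsilon>"
    using d2(2) small[OF st'] by (auto simp: dist_real_def)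
  have "\<bar>?a - ?b\<bar> < 2 * \<epsilon>" using A1 A2 eq by linarith
  then show False by (simp add: \<epsilon>_def)
qed

lemma norm_sq_vec: "(norm (x :: real^'n))^2 = (\<Sum>i\<in>UNIV. (x$i)^2)"
  unfolding power2_norm_eq_inner by (simp add: inner_vec_def power2_eq_square)

lemma norm_sq_mat: "(norm (M :: real^'n^'m))^2 = (\<Sum>p\<in>UNIV. \<Sum>q\<in>UNIV. (M$p$q)^2)"
  unfolding power2_norm_eq_inner by (simp add: inner_vec_def power2_eq_square)

lemma norm_row_le: "norm ((M :: real^'n^'m) $ p) \<le> norm M"
  by (rule Finite_Cartesian_Product.norm_nth_le)

lemma norm_mv: "norm ((M :: real^'n^'m) *v x) \<le> norm M * norm x"
proof -
  have e: "(M *v x) $ p = inner (M$p) x" for p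
    by (simp add: matrix_vector_mult_def inner_vec_def)
  have "(norm (M *v x))^2 = (\<Sum>p\<in>UNIV. (inner (M$p) x)^2)"
    by (simp add: norm_sq_vec e)
  also have "\<dots> \<le> (\<Sum>p\<in>UNIV. (norm (M$p))^2 * (norm x)^2)"
  proof (rule sum_mono)
    fix p
    have "\<bar>inner (M$p) x\<bar> \<le> norm (M$p) * norm x" by (rule Cauchy_Schwarz_ineq2)
    then show "(inner (M$p) x)^2 \<le> (norm (M$p))^2 * (norm x)^2"
      by (metis abs_ge_zero power2_abs power_mono power_mult_distrib)
  qed
  also have "\<dots> = (norm M)^2 * (norm x)^2"
    by (simp add: sum_distrib_right[symmetric] power2_norm_eq_inner inner_vec_def)
  finally have "(norm (M *v x))^2 \<le> (norm M * norm x)^2" by (simp add: power_mult_distrib)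
  then show ?thesis by (rule power2_le_imp_le) simp
qed

lemma norm_transpose_eq: "norm (transpose (M :: real^'n^'n)) = norm M"
proof -
  have "(norm (transpose M))^2 = (\<Sum>p\<in>UNIV. \<Sum>q\<in>UNIV. (M$q$p)^2)"
    unfolding norm_sq_mat by (simp add: transpose_def)
  also have "\<dots> = (\<Sum>q\<in>UNIV. \<Sum>p\<in>UNIV. (M$q$p)^2)" by (rule sum.swap)
  also have "\<dots> = (norm M)^2" by (rule norm_sq_mat[symmetric])
  finally have "(norm (transpose M))^2 = (norm M)^2" .
  then show ?thesis by (metis norm_ge_zero power2_eq_iff_nonneg)
qed

lemma norm_outer: "norm (\<chi> p q. (a :: real^'n)$p * (b :: real^'n)$q) = norm a * norm b"
proof -
  have "(norm (\<chi> p q. a$p * b$q))^2 = (\<Sum>p\<in>UNIV. \<Sum>q\<in>UNIV. (a$p)^2 * (b$q)^2)"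
    unfolding norm_sq_mat by (simp add: power_mult_distrib)
  also have "\<dots> = (\<Sum>p\<in>UNIV. (a$p)^2) * (\<Sum>q\<in>UNIV. (b$q)^2)" by (simp add: sum_product)
  also have "\<dots> = (norm a * norm b)^2" by (simp add: norm_sq_vec power_mult_distrib)
  finally have "(norm (\<chi> p q. a$p * b$q))^2 = (norm a * norm b)^2" .
  then show ?thesis by (metis norm_ge_zero power2_eq_iff_nonneg zero_le_mult_iff)
qed

lemma trace_bound: "\<bar>\<Sum>i\<in>(UNIV::3 set). (M :: real^3^3)$i$i\<bar> \<le> 3 * norm M"
proof -
  have "\<bar>\<Sum>i\<in>(UNIV::3 set). M$i$i\<bar> \<le> (\<Sum>i\<in>(UNIV::3 set). \<bar>M$i$i\<bar>)" by (rule sum_abs)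
  also have "\<dots> \<le> (\<Sum>i\<in>(UNIV::3 set). norm M)"
  proof (rule sum_mono)
    fix i :: 3
    have "\<bar>M$i$i\<bar> \<le> norm (M$i)" using component_le_norm_cart[of "M$i" i] by simp
    then show "\<bar>M$i$i\<bar> \<le> norm M" using norm_row_le[of M i] by linarith
  qed
  also have "\<dots> = 3 * norm M" by simp
  finally show ?thesis .
qed

lemma quad_split:
  fixes A :: "'n::finite \<Rightarrow> 'n \<Rightarrow> real" and w :: "real^'n"
  shows "(\<Sum>i\<in>UNIV. \<Sum>j\<in>UNIV. ((if i = j then 1 else 0) - w$i * w$j) * A i j)
     = (\<Sum>i\<in>UNIV. A i i) - (\<Sum>i\<in>UNIV. \<Sum>j\<in>UNIV. w$i * w$j * A i j)"
proof -
  have "((if i = j then 1 else 0) - w$i * w$j) * A i j = (if i = j then A i j else 0) - w$i * w$j * A i j" for i j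
    by (simp add: algebra_simps)
  then show ?thesis by (simp add: sum_subtractf)
qed

lemma alg_main:
  fixes Gm M :: "real^3^3" and n w :: "real^3" and c :: real
  assumes sym: "\<And>p q. Gm$p$q = Gm$q$p"
    and Mdef: "\<And>p q. M$p$q = Gm$p$q - n$q * (\<Sum>l\<in>UNIV. n$l * Gm$p$l)"
    and c: "0 < c" "c \<le> 1" and w: "(norm w)^2 \<le> 1 - c"
  shows "norm Gm \<le> (9 * norm M + \<bar>\<Sum>i\<in>UNIV. \<Sum>j\<in>UNIV. ((if i = j then 1 else 0) - w$i * w$j) * Gm$i$j\<bar>) / c"
proof -
  define g where "g = Gm *v n"
  have gp: "g$p = (\<Sum>l\<in>UNIV. n$l * Gm$p$l)" for p
    by (simp add: g_def matrix_vector_mult_def mult.commute)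
  define \<beta> where "\<beta> = inner n g"
  define N where "N = inner n n"
  define z where "z = (M - transpose M) *v n"
  define t where "t = (\<Sum>i\<in>UNIV. \<Sum>j\<in>UNIV. ((if i = j then 1 else 0) - w$i * w$j) * Gm$i$j)"
  define \<tau> where "\<tau> = (\<Sum>i\<in>UNIV. \<Sum>j\<in>UNIV. ((if i = j then 1 else 0) - w$i * w$j) * M$i$j)"
  have Gdec: "Gm$p$q = M$p$q + g$p * n$q" for p q by (simp add: Mdef gp)
  have Gout: "Gm = M + (\<chi> p q. g$p * n$q)" by (simp add: vec_eq_iff Gdec)
  have za: "N *\<^sub>R g = \<beta> *\<^sub>R n - z"
  proof -
    have "z$p = \<beta> * n$p - N * g$p" for p
    proof -
      have "z$p = (\<Sum>i\<in>UNIV. (M$p$i - M$i$p) * n$i)"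
        by (simp add: z_def matrix_vector_mult_def transpose_def)
      also have "\<dots> = (\<Sum>i\<in>UNIV. (Gm$p$i * n$i - g$p * (n$i * n$i)) - (Gm$p$i * n$i - n$p * (g$i * n$i)))"
        by (intro sum.cong refl) (simp add: Mdef gp[symmetric] sym[of _ p] algebra_simps)
      also have "\<dots> = \<beta> * n$p - N * g$p"
      proof -
        have s1: "(\<Sum>i\<in>UNIV. Gm$p$i * n$i) = g$p" by (simp add: gp mult.commute)
        have s2: "(\<Sum>i\<in>UNIV. g$p * (n$i * n$i)) = N * g$p"
          by (simp add: N_def inner_vec_def sum_distrib_left[symmetric] mult.commute)
        have s3: "(\<Sum>i\<in>UNIV. n$p * (g$i * n$i)) = \<beta> * n$p"
          by (simp add: \<beta>_def inner_vec_def sum_distrib_left[symmetric] mult.commute)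
        show ?thesis by (simp add: sum_subtractf s1 s2 s3)
      qed
      finally show ?thesis .
    qed
    then show ?thesis by (simp add: vec_eq_iff)
  qed
  have tb: "t = \<tau> + \<beta> - inner w g * inner w n"
  proof -
    have "t = (\<Sum>i\<in>UNIV. \<Sum>j\<in>UNIV. ((if i = j then 1 else 0) - w$i * w$j) * M$i$j
                 + ((if i = j then 1 else 0) - w$i * w$j) * (g$i * n$j))"
      unfolding t_def by (simp only: Gdec distrib_left)
    also have "\<dots> = \<tau> + (\<Sum>i\<in>UNIV. \<Sum>j\<in>UNIV. ((if i = j then 1 else 0) - w$i * w$j) * (g$i * n$j))"
      unfolding \<tau>_def by (simp only: sum.distrib)
    also have "(\<Sum>i\<in>UNIV. \<Sum>j\<in>UNIV. ((if i = j then 1 else 0) - w$i * w$j) * (g$i * n$j))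
        = (\<Sum>i\<in>UNIV. g$i * n$i) - (\<Sum>i\<in>UNIV. \<Sum>j\<in>UNIV. w$i * w$j * (g$i * n$j))"
      by (rule quad_split)
    also have "(\<Sum>i\<in>UNIV. \<Sum>j\<in>UNIV. w$i * w$j * (g$i * n$j)) = (\<Sum>i\<in>UNIV. w$i * g$i) * (\<Sum>j\<in>UNIV. w$j * n$j)"
      by (simp add: sum_product mult_ac)
    also have "(\<Sum>i\<in>UNIV. g$i * n$i) - (\<Sum>i\<in>UNIV. w$i * g$i) * (\<Sum>j\<in>UNIV. w$j * n$j) = \<beta> - inner w g * inner w n"
      by (simp add: \<beta>_def inner_vec_def mult.commute)
    finally show ?thesis by simp
  qed
  have nz: "norm z \<le> 2 * norm M * norm n"
  proof -
    have "norm z \<le> norm (M - transpose M) * norm n" unfolding z_def by (rule norm_mv)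
    also have "norm (M - transpose M) \<le> 2 * norm M"
      using norm_triangle_ineq4[of M "transpose M"] norm_transpose_eq[of M] by simp
    finally show ?thesis by (simp add: mult_right_mono)
  qed
  have \<tau>b: "\<bar>\<tau>\<bar> \<le> 4 * norm M"
  proof -
    have "\<tau> = (\<Sum>i\<in>UNIV. M$i$i) - (\<Sum>i\<in>UNIV. \<Sum>j\<in>UNIV. w$i * w$j * M$i$j)"
      unfolding \<tau>_def by (rule quad_split)
    also have "(\<Sum>i\<in>UNIV. \<Sum>j\<in>UNIV. w$i * w$j * M$i$j) = (\<Sum>i\<in>UNIV. w$i * (\<Sum>j\<in>UNIV. M$i$j * w$j))"
      by (simp add: sum_distrib_left mult_ac)
    also have "\<dots> = inner w (M *v w)"
      unfolding inner_vec_def matrix_vector_mult_def by simp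
    finally have "\<tau> = (\<Sum>i\<in>UNIV. M$i$i) - inner w (M *v w)" .
    moreover have "\<bar>inner w (M *v w)\<bar> \<le> norm M"
    proof -
      have nw: "norm w \<le> 1" by (rule power2_le_imp_le) (use w c in auto)
      have "\<bar>inner w (M *v w)\<bar> \<le> norm w * norm (M *v w)" by (rule Cauchy_Schwarz_ineq2)
      also have "\<dots> \<le> 1 * (norm M * norm w)"
        using nw norm_mv[of M w] by (intro mult_mono) auto
      also have "\<dots> \<le> norm M" using nw by (simp add: mult_left_le)
      finally show ?thesis .
    qed
    ultimately show ?thesis using trace_bound[of M] by linarith
  qed
  have Nn: "N = (norm n)^2" by (simp add: N_def power2_norm_eq_inner)
  have ell: "N - (inner w n)^2 \<ge> c * N"
  proof -
    have "(inner w n)^2 \<le> inner w w * inner n n" by (rule Cauchy_Schwarz_ineq)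
    also have "\<dots> \<le> (1 - c) * N" using w by (simp add: N_def power2_norm_eq_inner[symmetric] mult_right_mono)
    finally show ?thesis by (simp add: algebra_simps)
  qed
  show ?thesis
  proof (cases "n = 0")
    case True
    then have "(\<chi> p q. g$p * n$q) = (0::real^3^3)" by (simp add: vec_eq_iff)
    then have GM: "Gm = M" using Gout by simp
    have "norm M * c \<le> norm M" using c by (simp add: mult_left_le)
    then have "norm M * c \<le> 9 * norm M + \<bar>t\<bar>"
      using norm_ge_zero[of M] abs_ge_zero[of t] by linarith
    then have "norm Gm * c \<le> 9 * norm M + \<bar>t\<bar>" using GM by simp
    then show ?thesis using c unfolding t_def[symmetric] by (simp add: pos_le_divide_eq)
  next
    case False
    have npos: "norm n > 0" using False by simp
    have Npos: "N > 0" using npos Nn by simp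
    have idc: "N * (t - \<tau>) = \<beta> * (N - (inner w n)^2) + inner w z * inner w n"
    proof -
      have "inner w (N *\<^sub>R g) = \<beta> * inner w n - inner w z" using za by (simp add: inner_diff_right)
      then have "N * inner w g = \<beta> * inner w n - inner w z" by simp
      note h = this
      have "N * (t - \<tau>) = N * \<beta> - (N * inner w g) * inner w n" unfolding tb by (simp add: algebra_simps)
      also have "\<dots> = N * \<beta> - (\<beta> * inner w n - inner w z) * inner w n" using h by simp
      also have "\<dots> = \<beta> * (N - (inner w n)^2) + inner w z * inner w n" by (simp add: algebra_simps power2_eq_square)
      finally show ?thesis .
    qed
    have wz: "\<bar>inner w z * inner w n\<bar> \<le> 2 * norm M * N"
    proof -
      have nw: "norm w \<le> 1" by (rule power2_le_imp_le) (use w c in auto)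
      have "\<bar>inner w z\<bar> \<le> norm z" using Cauchy_Schwarz_ineq2[of w z] mult_right_mono[OF nw norm_ge_zero[of z]]
        by linarith
      moreover have "\<bar>inner w n\<bar> \<le> norm n" using Cauchy_Schwarz_ineq2[of w n] mult_right_mono[OF nw norm_ge_zero[of n]]
        by linarith
      ultimately have "\<bar>inner w z * inner w n\<bar> \<le> norm z * norm n"
        by (simp add: abs_mult mult_mono)
      also have "\<dots> \<le> 2 * norm M * norm n * norm n" using nz by (simp add: mult_right_mono)
      finally show ?thesis by (simp add: Nn power2_eq_square mult.assoc)
    qed
    have \<beta>b: "\<bar>\<beta>\<bar> * c \<le> \<bar>t\<bar> + 6 * norm M"
    proof -
      have "\<bar>\<beta>\<bar> * (c * N) \<le> \<bar>\<beta>\<bar> * (N - (inner w n)^2)" using ell by (simp add: mult_left_mono)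
      also have "\<dots> = \<bar>\<beta> * (N - (inner w n)^2)\<bar>"
      proof -
        have "0 \<le> N - (inner w n)^2" using ell Npos c by (meson order_trans mult_nonneg_nonneg less_imp_le)
        then show ?thesis by (simp add: abs_mult)
      qed
      also have "\<dots> \<le> N * \<bar>t - \<tau>\<bar> + 2 * norm M * N"
      proof -
        have e: "\<beta> * (N - (inner w n)^2) = N * (t - \<tau>) - inner w z * inner w n" using idc by simp
        have "\<bar>N * (t - \<tau>) - inner w z * inner w n\<bar> \<le> \<bar>N * (t - \<tau>)\<bar> + \<bar>inner w z * inner w n\<bar>"
          by (rule abs_triangle_ineq4)
        moreover have "\<bar>N * (t - \<tau>)\<bar> = N * \<bar>t - \<tau>\<bar>" using Npos by (simp add: abs_mult)
        ultimately show ?thesis using e wz by linarith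
      qed
      also have "\<dots> \<le> N * (\<bar>t\<bar> + 6 * norm M)"
      proof -
        have "\<bar>t - \<tau>\<bar> \<le> \<bar>t\<bar> + 4 * norm M" using \<tau>b by linarith
        then have "N * \<bar>t - \<tau>\<bar> \<le> N * (\<bar>t\<bar> + 4 * norm M)" using Npos by (simp add: mult_left_mono)
        then show ?thesis by (simp add: algebra_simps)
      qed
      finally have "(\<bar>\<beta>\<bar> * c) * N \<le> (\<bar>t\<bar> + 6 * norm M) * N" by (simp add: algebra_simps)
      then show ?thesis using Npos by simp
    qed
    have gb: "norm g * norm n \<le> \<bar>\<beta>\<bar> + 2 * norm M"
    proof -
      have "N * norm g = norm (\<beta> *\<^sub>R n - z)" using za[symmetric] Npos by simp
      also have "\<dots> \<le> \<bar>\<beta>\<bar> * norm n + 2 * norm M * norm n"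
        using norm_triangle_ineq4[of "\<beta> *\<^sub>R n" z] nz by simp
      finally have "(norm g * norm n) * norm n \<le> (\<bar>\<beta>\<bar> + 2 * norm M) * norm n"
        by (simp add: Nn power2_eq_square algebra_simps)
      then show ?thesis using npos by simp
    qed
    have "norm Gm \<le> norm M + norm g * norm n"
      using Gout norm_triangle_ineq[of M "\<chi> p q. g$p * n$q"] norm_outer[of g n] by simp
    also have "\<dots> \<le> 3 * norm M + \<bar>\<beta>\<bar>" using gb by simp
    finally have "norm Gm * c \<le> (3 * norm M + \<bar>\<beta>\<bar>) * c"
      using c by (simp add: mult_right_mono)
    also have "\<dots> = 3 * norm M * c + \<bar>\<beta>\<bar> * c" by (simp add: algebra_simps)
    also have "\<dots> \<le> 9 * norm M + \<bar>t\<bar>"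
    proof -
      have "norm M * c \<le> norm M" using c by (simp add: mult_left_le)
      then show ?thesis using \<beta>b by linarith
    qed
    finally show ?thesis using c unfolding t_def[symmetric] by (simp add: pos_le_divide_eq)
  qed
qed

lemma pd_diff:
  assumes "f differentiable (at x)" "g differentiable (at x)"
  shows "pd i (\<lambda>y. f y - g y) x = pd i f x - pd i g x"
proof -
  obtain f' g' where f': "(f has_derivative f') (at x)" and g': "(g has_derivative g') (at x)"
    using assms unfolding differentiable_def by blast
  show ?thesis using pd_eq[OF has_derivative_diff[OF f' g']] pd_eq[OF f'] pd_eq[OF g'] by simp
qed

lemma pd_sum:
  assumes "finite I" "\<And>k. k \<in> I \<Longrightarrow> F k differentiable (at x)"
  shows "pd i (\<lambda>y. \<Sum>k\<in>I. F k y) x = (\<Sum>k\<in>I. pd i (F k) x)"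
proof -
  have d: "\<And>k. k \<in> I \<Longrightarrow> (F k has_derivative frechet_derivative (F k) (at x)) (at x)"
    using assms(2) frechet_derivative_works by blast
  show ?thesis
    using pd_eq[OF has_derivative_sum[of I F "\<lambda>k. frechet_derivative (F k) (at x)", OF d]]
    by (simp add: pd_def)
qed

lemma pd_tan:
  assumes D: "D differentiable (at x)" "\<And>l. pd l D differentiable (at x)"
    and nv: "\<And>l. (\<lambda>y. nv y $ l) differentiable (at x)"
  shows "pd p (tan_d nv i D) x = pd p (pd i D) x - nv x $ i * (\<Sum>l\<in>UNIV. nv x $ l * pd p (pd l D) x)
     - (pd p (\<lambda>y. nv y $ i) x * (\<Sum>l\<in>UNIV. nv x $ l * pd l D x)
        + nv x $ i * (\<Sum>l\<in>UNIV. pd p (\<lambda>y. nv y $ l) x * pd l D x))"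
proof -
  have td: "tan_d nv i D = (\<lambda>y. pd i D y - nv y $ i * (\<Sum>l\<in>UNIV. nv y $ l * pd l D y))"
    by (simp add: tan_d_def[abs_def])
  have dS: "(\<lambda>y. \<Sum>l\<in>UNIV. nv y $ l * pd l D y) differentiable (at x)"
    using D nv by (intro differentiable_sum differentiable_mult) auto
  have pS: "pd p (\<lambda>y. \<Sum>l\<in>UNIV. nv y $ l * pd l D y) x
      = (\<Sum>l\<in>UNIV. pd p (\<lambda>y. nv y $ l) x * pd l D x + nv x $ l * pd p (pd l D) x)"
  proof -
    have "pd p (\<lambda>y. \<Sum>l\<in>UNIV. nv y $ l * pd l D y) x = (\<Sum>l\<in>UNIV. pd p (\<lambda>y. nv y $ l * pd l D y) x)"
      using D nv by (intro pd_sum) (auto intro: differentiable_mult)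
    also have "\<dots> = (\<Sum>l\<in>UNIV. pd p (\<lambda>y. nv y $ l) x * pd l D x + nv x $ l * pd p (pd l D) x)"
      using D nv by (intro sum.cong refl pd_mult) auto
    finally show ?thesis .
  qed
  have "pd p (tan_d nv i D) x = pd p (pd i D) x - pd p (\<lambda>y. nv y $ i * (\<Sum>l\<in>UNIV. nv y $ l * pd l D y)) x"
    unfolding td using D nv dS by (intro pd_diff) (auto intro: differentiable_mult)
  also have "pd p (\<lambda>y. nv y $ i * (\<Sum>l\<in>UNIV. nv y $ l * pd l D y)) x
     = pd p (\<lambda>y. nv y $ i) x * (\<Sum>l\<in>UNIV. nv x $ l * pd l D x) + nv x $ i * pd p (\<lambda>y. \<Sum>l\<in>UNIV. nv y $ l * pd l D y) x"
    using nv dS by (rule pd_mult)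
  also have "\<dots> = pd p (\<lambda>y. nv y $ i) x * (\<Sum>l\<in>UNIV. nv x $ l * pd l D x)
       + nv x $ i * (\<Sum>l\<in>UNIV. pd p (\<lambda>y. nv y $ l) x * pd l D x)
       + nv x $ i * (\<Sum>l\<in>UNIV. nv x $ l * pd p (pd l D) x)"
    unfolding pS by (simp add: sum.distrib algebra_simps)
  finally show ?thesis by simp
qed

lemma integ_on:
  fixes f :: "real^3 \<Rightarrow> real"
  assumes "open \<Omega>" "bounded \<Omega>" "closure \<Omega> \<subseteq> U" "continuous_on U f"
  shows "f integrable_on \<Omega>"
proof -
  have cc: "continuous_on (closure \<Omega>) f" using assms continuous_on_subset by blast
  have "compact (closure \<Omega>)" using assms(2) by (simp add: compact_closure)
  then have "bounded (f ` closure \<Omega>)" using cc compact_continuous_image compact_imp_bounded by blast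
  then obtain B where B: "\<And>x. x \<in> closure \<Omega> \<Longrightarrow> norm (f x) \<le> B"
    unfolding bounded_iff by blast
  have lm: "\<Omega> \<in> lmeasurable" using assms lmeasurable_open by blast
  then have sl: "\<Omega> \<in> sets lebesgue" by (simp add: fmeasurableD)
  have meas: "f \<in> borel_measurable (lebesgue_on \<Omega>)"
    by (rule continuous_imp_measurable_on_sets_lebesgue[OF continuous_on_subset[OF cc closure_subset] sl])
  show ?thesis
    by (rule measurable_bounded_by_integrable_imp_integrable_real[OF meas integrable_on_const[OF lm, of B] _ sl])
       (use B closure_subset in force)
qed

lemma finite_len: "finite {is :: 3 list. length is = m}"
  using finite_lists_length_eq[of "UNIV :: 3 set" m] by simp

lemma sum_len_Suc:
  "(\<Sum>L\<in>{L :: 3 list. length L = Suc m}. f L) = (\<Sum>p\<in>UNIV. \<Sum>is\<in>{is. length is = m}. f (p # is))"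
proof -
  have e: "{L :: 3 list. length L = Suc m} = (\<lambda>(p, is). p # is) ` (UNIV \<times> {is. length is = m})"
    by (auto simp: image_def length_Suc_conv)
  have i: "inj_on (\<lambda>(p :: 3, is). p # is) (UNIV \<times> {is. length is = m})"
    by (auto simp: inj_on_def)
  show ?thesis unfolding e sum.reindex[OF i] by (simp add: sum.cartesian_product case_prod_beta' o_def)
qed

definition Isq :: "(real^3) set \<Rightarrow> (real^3 \<Rightarrow> real) \<Rightarrow> real" where
  "Isq \<Omega> f = integral \<Omega> (\<lambda>x. (f x)^2)"

lemma Isq_nonneg: "0 \<le> Isq \<Omega> f"
  unfolding Isq_def
  by (cases "(\<lambda>x. (f x)^2) integrable_on \<Omega>") (auto intro: integral_nonneg simp: not_integrable_integral)

lemma sob_sq: "(sob_norm k \<Omega> f)^2 = (\<Sum>m\<le>k. \<Sum>is\<in>{is::3 list. length is = m}. Isq \<Omega> (dpar is f))"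
  unfolding sob_norm_def Isq_def[symmetric]
  by (rule real_sqrt_pow2) (intro sum_nonneg Isq_nonneg)

lemma sob_nonneg: "0 \<le> sob_norm k \<Omega> f"
  unfolding sob_norm_def Isq_def[symmetric] by (intro real_sqrt_ge_zero sum_nonneg Isq_nonneg)

lemma fam_sq: "(fam_norm k \<Omega> F A)^2 = (\<Sum>a\<in>A. (sob_norm k \<Omega> (F a))^2)"
  unfolding fam_norm_def by (rule real_sqrt_pow2) (intro sum_nonneg zero_le_power2)

lemma fam_nonneg: "0 \<le> fam_norm k \<Omega> F A"
  unfolding fam_norm_def by (intro real_sqrt_ge_zero sum_nonneg zero_le_power2)

lemma sob0_sq: "(sob_norm 0 \<Omega> f)^2 = Isq \<Omega> f"
proof -
  have "{is :: 3 list. length is = 0} = {[]}" by auto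
  then show ?thesis unfolding sob_sq by simp
qed

lemma sob_level_le:
  assumes "m \<le> k"
  shows "(\<Sum>is\<in>{is::3 list. length is = m}. Isq \<Omega> (dpar is f)) \<le> (sob_norm k \<Omega> f)^2"
  unfolding sob_sq
  by (rule member_le_sum[where f="\<lambda>m. \<Sum>is\<in>{is::3 list. length is = m}. Isq \<Omega> (dpar is f)"])
     (use assms in \<open>auto intro: sum_nonneg Isq_nonneg\<close>)

lemma sob_split:
  "(sob_norm (Suc k) \<Omega> f)^2 = (sob_norm k \<Omega> f)^2 + (\<Sum>is\<in>{is::3 list. length is = Suc k}. Isq \<Omega> (dpar is f))"
  unfolding sob_sq by simp

lemma sq_sum2: "((a::real) + b)^2 \<le> 2 * a^2 + 2 * b^2"
proof -
  have "0 \<le> (a - b)^2" by simp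
  then show ?thesis by (simp add: power2_eq_square algebra_simps)
qed

lemma pointwise:
  fixes D :: "real^3 \<Rightarrow> real" and nv :: "real^3 \<Rightarrow> real^3" and w :: "real^3"
  assumes U: "open U" "x \<in> U" and D: "smooth_on U D"
    and nv: "\<And>l. smooth_on U (\<lambda>y. nv y $ l)"
    and c: "0 < c" "c \<le> 1" "(norm w)^2 \<le> 1 - c"
    and Bn: "norm (nv x) \<le> Bn" and Bd: "norm (\<chi> p l. pd p (\<lambda>y. nv y $ l) x) \<le> Bd"
  shows "(\<Sum>p\<in>UNIV. \<Sum>q\<in>UNIV. (pd p (pd q D) x)^2)
     \<le> (324 + 11664 * Bn^2 * Bd^2) / c^2 *
        ((\<Sum>p\<in>UNIV. \<Sum>i\<in>UNIV. (pd p (tan_d nv i D) x)^2) + (\<Sum>l\<in>UNIV. (pd l D x)^2)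
         + (\<Sum>i\<in>UNIV. \<Sum>j\<in>UNIV. ((if i = j then 1 else 0) - w$i * w$j) * dpar [i, j] D x)^2)"
proof -
  define Gm :: "real^3^3" where "Gm = (\<chi> p q. pd p (pd q D) x)"
  define n where "n = nv x"
  define M :: "real^3^3" where "M = (\<chi> p q. Gm$p$q - n$q * (\<Sum>l\<in>UNIV. n$l * Gm$p$l))"
  define d :: "real^3" where "d = (\<chi> l. pd l D x)"
  define R :: "real^3^3" where "R = (\<chi> p l. pd p (\<lambda>y. nv y $ l) x)"
  define At where "At = (\<Sum>i\<in>UNIV. \<Sum>j\<in>UNIV. ((if i = j then 1 else 0) - w$i * w$j) * dpar [i, j] D x)"
  define SE where "SE = (\<Sum>p\<in>UNIV. \<Sum>i\<in>UNIV. (pd p (tan_d nv i D) x)^2)"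
  have Bn0: "0 \<le> Bn" using Bn norm_ge_zero order_trans by blast
  have Bd0: "0 \<le> Bd" using Bd norm_ge_zero order_trans by blast
  have sym: "\<And>p q. Gm$p$q = Gm$q$p" unfolding Gm_def using schwarz[OF U(1) D U(2)] by simp
  have AtG: "At = (\<Sum>i\<in>UNIV. \<Sum>j\<in>UNIV. ((if i = j then 1 else 0) - w$i * w$j) * Gm$i$j)"
    by (simp add: At_def Gm_def)
  have main: "norm Gm \<le> (9 * norm M + \<bar>At\<bar>) / c"
    unfolding AtG by (rule alg_main[OF sym _ c]) (simp add: M_def)
  have Dd: "D differentiable (at x)" "\<And>l. pd l D differentiable (at x)"
    using smooth_on_diff[OF D U(2)] smooth_on_diff[OF smooth_on_pd[OF D] U(2)] by auto
  have nvd: "\<And>l. (\<lambda>y. nv y $ l) differentiable (at x)" using smooth_on_diff[OF nv U(2)] by auto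
  define L where "L p i = R$p$i * inner n d + n$i * inner (R$p) d" for p i
  have ME: "M$p$i = pd p (tan_d nv i D) x + L p i" for p i
  proof -
    have "pd p (tan_d nv i D) x = Gm$p$i - n$i * (\<Sum>l\<in>UNIV. n$l * Gm$p$l) - L p i"
      unfolding pd_tan[OF Dd nvd] L_def
      by (simp add: Gm_def n_def R_def d_def inner_vec_def mult.commute)
    then show ?thesis by (simp add: M_def)
  qed
  have Lb: "(L p i)^2 \<le> 4 * Bn^2 * Bd^2 * (norm d)^2" for p i
  proof -
    have nn: "norm n \<le> Bn" using Bn by (simp add: n_def)
    have "norm (R$p) \<le> norm R" by (rule Finite_Cartesian_Product.norm_nth_le)
    then have rp: "norm (R$p) \<le> Bd" using Bd unfolding R_def by linarith
    have a1: "\<bar>R$p$i\<bar> \<le> Bd" using component_le_norm_cart[of "R$p" i] rp by simp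
    have a2: "\<bar>inner n d\<bar> \<le> Bn * norm d"
      using Cauchy_Schwarz_ineq2[of n d] mult_right_mono[OF nn norm_ge_zero[of d]] by linarith
    have a3: "\<bar>n$i\<bar> \<le> Bn" using component_le_norm_cart[of n i] nn by simp
    have a4: "\<bar>inner (R$p) d\<bar> \<le> Bd * norm d"
      using Cauchy_Schwarz_ineq2[of "R$p" d] mult_right_mono[OF rp norm_ge_zero[of d]] by linarith
    have "\<bar>L p i\<bar> \<le> \<bar>R$p$i\<bar> * \<bar>inner n d\<bar> + \<bar>n$i\<bar> * \<bar>inner (R$p) d\<bar>"
      unfolding L_def by (metis abs_mult abs_triangle_ineq)
    also have "\<dots> \<le> Bd * (Bn * norm d) + Bn * (Bd * norm d)"
      using a1 a2 a3 a4 Bn0 Bd0 by (intro add_mono mult_mono) auto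
    also have "\<dots> = 2 * Bn * Bd * norm d" by (simp add: algebra_simps)
    finally have "\<bar>L p i\<bar> \<le> 2 * Bn * Bd * norm d" .
    then have "(L p i)^2 \<le> (2 * Bn * Bd * norm d)^2"
      by (metis abs_ge_zero power2_abs power_mono)
    then show ?thesis by (simp add: power_mult_distrib)
  qed
  have nM: "(norm M)^2 \<le> 2 * SE + 72 * Bn^2 * Bd^2 * (norm d)^2"
  proof -
    have "(norm M)^2 = (\<Sum>p\<in>UNIV. \<Sum>i\<in>UNIV. (M$p$i)^2)" by (rule norm_sq_mat)
    also have "\<dots> \<le> (\<Sum>p\<in>UNIV. \<Sum>i\<in>UNIV. 2 * (pd p (tan_d nv i D) x)^2 + 8 * Bn^2 * Bd^2 * (norm d)^2)"
    proof (intro sum_mono)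
      fix p i
      have "(M$p$i)^2 \<le> 2 * (pd p (tan_d nv i D) x)^2 + 2 * (L p i)^2" unfolding ME by (rule sq_sum2)
      then show "(M$p$i)^2 \<le> 2 * (pd p (tan_d nv i D) x)^2 + 8 * Bn^2 * Bd^2 * (norm d)^2"
        using Lb[of p i] by linarith
    qed
    also have "\<dots> = 2 * SE + 72 * Bn^2 * Bd^2 * (norm d)^2"
      by (simp add: SE_def sum.distrib sum_distrib_left)
    finally show ?thesis .
  qed
  have G2: "(norm Gm)^2 \<le> (162 * (norm M)^2 + 2 * At^2) / c^2"
  proof -
    have "(norm Gm)^2 \<le> ((9 * norm M + \<bar>At\<bar>) / c)^2"
      using main by (intro power_mono) auto
    also have "\<dots> = (9 * norm M + \<bar>At\<bar>)^2 / c^2" by (simp add: power_divide)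
    also have "\<dots> \<le> (162 * (norm M)^2 + 2 * At^2) / c^2"
    proof (rule divide_right_mono)
      show "(9 * norm M + \<bar>At\<bar>)^2 \<le> 162 * (norm M)^2 + 2 * At^2"
        using sq_sum2[of "9 * norm M" "\<bar>At\<bar>"] by (simp add: power_mult_distrib)
    qed simp
    finally show ?thesis .
  qed
  have "(\<Sum>p\<in>UNIV. \<Sum>q\<in>UNIV. (pd p (pd q D) x)^2) = (norm Gm)^2"
    by (simp add: norm_sq_mat Gm_def)
  also have "\<dots> \<le> (162 * (2 * SE + 72 * Bn^2 * Bd^2 * (norm d)^2) + 2 * At^2) / c^2"
    using G2 nM c by (smt (verit) divide_right_mono zero_le_power2)
  also have "\<dots> \<le> (324 + 11664 * Bn^2 * Bd^2) / c^2 * (SE + (norm d)^2 + At^2)"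
  proof -
    have SE0: "0 \<le> SE" unfolding SE_def by (intro sum_nonneg) auto
    have B0: "0 \<le> Bn^2 * Bd^2" by simp
    have "162 * (2 * SE + 72 * Bn^2 * Bd^2 * (norm d)^2) + 2 * At^2
        \<le> (324 + 11664 * Bn^2 * Bd^2) * (SE + (norm d)^2 + At^2)"
    proof -
      have "(324 + 11664 * Bn^2 * Bd^2) * (SE + (norm d)^2 + At^2)
          = 324 * SE + 324 * (norm d)^2 + 324 * At^2 + 11664 * (Bn^2 * Bd^2) * SE
            + 11664 * (Bn^2 * Bd^2) * (norm d)^2 + 11664 * (Bn^2 * Bd^2) * At^2"
        by (simp add: algebra_simps)
      moreover have "0 \<le> (Bn^2 * Bd^2) * SE" "0 \<le> (Bn^2 * Bd^2) * At^2" using SE0 B0 by simp_all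
      ultimately show ?thesis by (simp add: algebra_simps)
    qed
    then show ?thesis using c by (simp add: divide_right_mono)
  qed
  also have "\<dots> = (324 + 11664 * Bn^2 * Bd^2) / c^2 *
        ((\<Sum>p\<in>UNIV. \<Sum>i\<in>UNIV. (pd p (tan_d nv i D) x)^2) + (\<Sum>l\<in>UNIV. (pd l D x)^2)
         + (\<Sum>i\<in>UNIV. \<Sum>j\<in>UNIV. ((if i = j then 1 else 0) - w$i * w$j) * dpar [i, j] D x)^2)"
    by (simp add: SE_def At_def norm_sq_vec d_def)
  finally show ?thesis .
qed

lemma smooth_fun_diff: "smooth_fun f \<Longrightarrow> f differentiable (at x)"
  unfolding smooth_fun_def by (metis dpar.simps(1))

lemma smooth_fun_cont: "smooth_fun f \<Longrightarrow> continuous_on S f"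
  by (meson continuous_at_imp_continuous_on differentiable_imp_continuous_within smooth_fun_diff)

lemma smooth_fun_pd: "smooth_fun f \<Longrightarrow> smooth_fun (pd i f)"
  unfolding smooth_fun_def by (metis append_Cons append_Nil dpar.simps dpar_append)

lemma smooth_on_cont: "smooth_on U f \<Longrightarrow> continuous_on U f"
  by (meson continuous_at_imp_continuous_on differentiable_imp_continuous_within smooth_on_diff)

lemma pos_lb:
  fixes g :: "real^3 \<Rightarrow> real"
  assumes "compact K" "continuous_on K g" "\<And>x. x \<in> K \<Longrightarrow> 0 < g x"
  shows "\<exists>c>0. \<forall>x\<in>K. c \<le> g x"
proof (cases "K = {}")
  case True
  then show ?thesis by (intro exI[of _ 1]) auto
next
  case False
  then obtain x0 where "x0 \<in> K" "\<forall>y\<in>K. g x0 \<le> g y"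
    using continuous_attains_inf[OF assms(1) False assms(2)] by blast
  then show ?thesis using assms(3) by blast
qed

lemma ub:
  fixes f :: "real^3 \<Rightarrow> 'a::real_normed_vector"
  assumes "compact K" "continuous_on K f"
  shows "\<exists>B. \<forall>x\<in>K. norm (f x) \<le> B"
proof -
  have "bounded (f ` K)" using assms compact_continuous_image compact_imp_bounded by blast
  then show ?thesis unfolding bounded_iff by blast
qed

lemma dparR: "h \<in> Rg V0 U \<Longrightarrow> open U \<Longrightarrow> smooth_on U V0 \<Longrightarrow> \<forall>x\<in>U. V0 x \<noteq> 0 \<Longrightarrow> dpar L h \<in> Rg V0 U"
  by (meson Rg.sm Rg_smooth smooth_on_dpar)

lemma HI:
  assumes "open \<Omega>" "bounded \<Omega>" "closure \<Omega> \<subseteq> U" "smooth_on U h"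
  shows "((\<lambda>x. (h x)^2) has_integral Isq \<Omega> h) \<Omega>"
proof -
  have "continuous_on U (\<lambda>x. (h x)^2)" by (rule continuous_on_power[OF smooth_on_cont[OF assms(4)]])
  then have "(\<lambda>x. (h x)^2) integrable_on \<Omega>" using integ_on assms by blast
  then show ?thesis unfolding Isq_def by (rule integrable_integral)
qed

lemma sq_le_sum5:
  fixes a b c d e :: real
  assumes "0 \<le> a" "0 \<le> b" "0 \<le> c" "0 \<le> d" "0 \<le> e"
  shows "a^2 + b^2 + c^2 + d^2 + e^2 \<le> (a + b + c + d + e)^2"
  using assms by (simp add: power2_eq_square algebra_simps)

lemma swap3: "(\<Sum>a\<in>A. \<Sum>b\<in>B. \<Sum>c\<in>C. f a b c) = (\<Sum>b\<in>B. \<Sum>c\<in>C. \<Sum>a\<in>A. f a b c)"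
proof -
  have "(\<Sum>a\<in>A. \<Sum>b\<in>B. \<Sum>c\<in>C. f a b c) = (\<Sum>b\<in>B. \<Sum>a\<in>A. \<Sum>c\<in>C. f a b c)" by (rule sum.swap)
  also have "\<dots> = (\<Sum>b\<in>B. \<Sum>c\<in>C. \<Sum>a\<in>A. f a b c)" by (intro sum.cong refl sum.swap)
  finally show ?thesis .
qed

lemma swap3r: "(\<Sum>a\<in>A. \<Sum>b\<in>B. \<Sum>c\<in>C. f a b c) = (\<Sum>c\<in>C. \<Sum>b\<in>B. \<Sum>a\<in>A. f a b c)"
proof -
  have "(\<Sum>a\<in>A. \<Sum>b\<in>B. \<Sum>c\<in>C. f a b c) = (\<Sum>b\<in>B. \<Sum>c\<in>C. \<Sum>a\<in>A. f a b c)" by (rule swap3)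
  also have "\<dots> = (\<Sum>c\<in>C. \<Sum>b\<in>B. \<Sum>a\<in>A. f a b c)" by (rule sum.swap)
  finally show ?thesis .
qed

lemma swap3c: "(\<Sum>a\<in>A. \<Sum>b\<in>B. \<Sum>c\<in>C. f a b c) = (\<Sum>c\<in>C. \<Sum>a\<in>A. \<Sum>b\<in>B. f a b c)"
proof -
  have "(\<Sum>a\<in>A. \<Sum>b\<in>B. \<Sum>c\<in>C. f a b c) = (\<Sum>a\<in>A. \<Sum>c\<in>C. \<Sum>b\<in>B. f a b c)" by (intro sum.cong refl sum.swap)
  also have "\<dots> = (\<Sum>c\<in>C. \<Sum>a\<in>A. \<Sum>b\<in>B. f a b c)" by (rule sum.swap)
  finally show ?thesis .
qed

lemma sum_lin5:
  fixes K :: real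
  shows "(\<Sum>x\<in>A. K * (2 * a x + 2 * b x + c x + 2 * d x + 2 * e x))
    = K * (2 * (\<Sum>x\<in>A. a x) + 2 * (\<Sum>x\<in>A. b x) + (\<Sum>x\<in>A. c x) + 2 * (\<Sum>x\<in>A. d x) + 2 * (\<Sum>x\<in>A. e x))"
  by (simp add: sum.distrib sum_distrib_left distrib_left)

lemma lev1: "(\<Sum>p\<in>UNIV. Isq \<Omega> (dpar [p] f)) \<le> (sob_norm 1 \<Omega> f)^2"
proof -
  have e: "{is :: 3 list. length is = 0} = {[]}" by auto
  have "(\<Sum>L\<in>{L::3 list. length L = Suc 0}. Isq \<Omega> (dpar L f)) \<le> (sob_norm 1 \<Omega> f)^2"
    using sob_level_le[of "Suc 0" 1 \<Omega> f] by simp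
  then show ?thesis unfolding sum_len_Suc e by simp
qed

theorem lemma2p13:
  fixes \<Omega> :: "(real^3) set"
    and sig2 V0 :: "real^3 \<Rightarrow> real"
    and Vs nv :: "real^3 \<Rightarrow> real^3"
    and c0 :: real
  assumes "open \<Omega>" and "bounded \<Omega>"
    and "smooth_fun sig2" and "smooth_fun V0"
    and "\<forall>i. smooth_fun (\<lambda>x. Vs x $ i)"
    and "\<forall>i. smooth_fun (\<lambda>x. nv x $ i)"
    and "\<forall>x\<in>closure \<Omega>. 0 < V0 x \<and> (norm (Vs x))\<^sup>2 - (V0 x)\<^sup>2 < 0"
    and "\<forall>x\<in>frontier \<Omega>. sig2 x = c0"
    and "\<forall>x\<in>\<Omega>. sig2 x \<noteq> c0"
    and "\<forall>x\<in>frontier \<Omega>. grad sig2 x \<noteq> 0"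
    and "\<forall>x\<in>frontier \<Omega>. nv x = nunder sig2 x"
  shows "\<forall>j::nat. j \<ge> 2 \<longrightarrow> (\<exists>C::real. \<forall>\<Theta>. smooth_fun \<Theta> \<longrightarrow>
           sob_norm j \<Omega> \<Theta> \<le> C * (
               sob_norm (j - 1) \<Omega> \<Theta>
             + fam_norm 0 \<Omega> (\<lambda>is. dpar is (Aop V0 Vs \<Theta>)) {is. length is = j - 2}
             + fam_norm 0 \<Omega> (\<lambda>is x. Aop V0 Vs (dpar is \<Theta>) x - dpar is (Aop V0 Vs \<Theta>) x)
                 {is. length is = j - 2}
             + fam_norm 1 \<Omega> (\<lambda>(i, is) x. tan_d nv i (dpar is \<Theta>) x - dpar is (tan_d nv i \<Theta>) x)
                 (UNIV \<times> {is. length is = j - 2})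
             + fam_norm (j - 1) \<Omega> (\<lambda>i. tan_d nv i \<Theta>) UNIV))"
proof (intro allI impI)
  fix j :: nat
  assume j2: "2 \<le> j"
  define k where "k = j - 2"
  have jk: "j = Suc (Suc k)" using j2 by (simp add: k_def)
  have j1: "j - 1 = Suc k" using jk by simp
  have Om: "open \<Omega>" "bounded \<Omega>" using assms(1,2) by auto
  have V0sm: "smooth_fun V0" using assms(4) .
  have Vssm: "\<And>i. smooth_fun (\<lambda>x. Vs x $ i)" using assms(5) by auto
  have nvsm: "\<And>i. smooth_fun (\<lambda>x. nv x $ i)" using assms(6) by auto
  define U where "U = {x. 0 < V0 x}"
  have Uo: "open U" unfolding U_def
    by (rule open_Collect_less) (auto intro: smooth_fun_cont[OF V0sm])
  have clU: "closure \<Omega> \<subseteq> U" using assms(7) by (auto simp: U_def)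
  have V0U: "smooth_on U V0" by (rule smooth_on_fun[OF V0sm])
  have V0nz: "\<forall>x\<in>U. V0 x \<noteq> 0" by (auto simp: U_def)
  have RS: "\<And>h. h \<in> Rg V0 U \<Longrightarrow> smooth_on U h" using Rg_smooth[OF Uo V0U V0nz] by blast
  have dR: "\<And>h L. h \<in> Rg V0 U \<Longrightarrow> dpar L h \<in> Rg V0 U" using dparR[OF _ Uo V0U V0nz] by blast
  have nvR: "\<And>l. (\<lambda>y. nv y $ l) \<in> Rg V0 U" by (rule Rg.sm[OF smooth_on_fun[OF nvsm]])
  have VsR: "\<And>l. (\<lambda>y. Vs y $ l) \<in> Rg V0 U" by (rule Rg.sm[OF smooth_on_fun[OF Vssm]])
  have tanR: "\<And>f i. f \<in> Rg V0 U \<Longrightarrow> tan_d nv i f \<in> Rg V0 U"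
  proof -
    fix f i assume f: "f \<in> Rg V0 U"
    have pR: "\<And>l. pd l f \<in> Rg V0 U" by (rule Rg.sm[OF smooth_on_pd[OF RS[OF f]]])
    have "(\<lambda>y. pd i f y - nv y $ i * (\<Sum>l\<in>UNIV. nv y $ l * pd l f y)) \<in> Rg V0 U"
      by (intro Rg_diff Rg.mul Rg_sum pR nvR) auto
    moreover have "tan_d nv i f = (\<lambda>y. pd i f y - nv y $ i * (\<Sum>l\<in>UNIV. nv y $ l * pd l f y))"
      by (simp add: tan_d_def[abs_def])
    ultimately show "tan_d nv i f \<in> Rg V0 U" by simp
  qed
  have AopR: "\<And>f. f \<in> Rg V0 U \<Longrightarrow> Aop V0 Vs f \<in> Rg V0 U"
  proof -
    fix f assume f: "f \<in> Rg V0 U"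
    have "(\<lambda>x. \<Sum>i\<in>UNIV. \<Sum>j\<in>UNIV. ((\<lambda>x. if i = j then 1 else 0) x
            - (Vs x $ i * inverse (V0 x)) * (Vs x $ j * inverse (V0 x))) * dpar [i, j] f x) \<in> Rg V0 U"
      by (intro Rg_sum Rg.mul Rg_diff Rg_const Rg.inv VsR dR f) auto
    moreover have "Aop V0 Vs f = (\<lambda>x. \<Sum>i\<in>UNIV. \<Sum>j\<in>UNIV. ((\<lambda>x. if i = j then 1 else 0) x
            - (Vs x $ i * inverse (V0 x)) * (Vs x $ j * inverse (V0 x))) * dpar [i, j] f x)"
      by (simp add: Aop_def[abs_def] abar_def divide_inverse)
    ultimately show "Aop V0 Vs f \<in> Rg V0 U" by simp
  qed
  have cpt: "compact (closure \<Omega>)" using Om(2) by (simp add: compact_closure)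
  \<comment> \<open>ellipticity constant\<close>
  define w where "w x = (\<chi> i. Vs x $ i / V0 x)" for x
  obtain c where c: "0 < c" "c \<le> 1" "\<And>x. x \<in> closure \<Omega> \<Longrightarrow> (norm (w x))^2 \<le> 1 - c"
  proof -
    have wc: "continuous_on U w" unfolding w_def
      by (intro continuous_on_vec_lambda continuous_on_divide smooth_fun_cont Vssm V0sm) (use V0nz in auto)
    have "continuous_on (closure \<Omega>) (\<lambda>x. 1 - (norm (w x))^2)"
      by (intro continuous_intros continuous_on_subset[OF wc clU])
    moreover have "0 < 1 - (norm (w x))^2" if x: "x \<in> closure \<Omega>" for x
    proof -
      have V: "0 < V0 x" "(norm (Vs x))^2 < (V0 x)^2" using assms(7) x by auto
      have "w x = inverse (V0 x) *\<^sub>R Vs x" by (simp add: w_def vec_eq_iff divide_inverse mult.commute)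
      then have "(norm (w x))^2 = (norm (Vs x))^2 / (V0 x)^2"
        using V by (simp add: power_mult_distrib power_inverse divide_inverse mult.commute)
      also have "\<dots> < 1" using V by simp
      finally show ?thesis by simp
    qed
    ultimately obtain c0 where c0: "c0 > 0" "\<forall>x\<in>closure \<Omega>. c0 \<le> 1 - (norm (w x))^2"
      using pos_lb[OF cpt] by blast
    show ?thesis
    proof (rule that[of "min c0 1"])
      show "0 < min c0 1" using c0 by simp
      show "min c0 1 \<le> 1" by simp
      fix x assume "x \<in> closure \<Omega>"
      then show "(norm (w x))^2 \<le> 1 - min c0 1" using c0 by fastforce
    qed
  qed
  obtain Bn where Bn: "\<And>x. x \<in> closure \<Omega> \<Longrightarrow> norm (nv x) \<le> Bn"
  proof -
    have "continuous_on (closure \<Omega>) (\<lambda>x. \<chi> i. nv x $ i)"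
      by (intro continuous_on_vec_lambda smooth_fun_cont nvsm)
    then obtain B where "\<forall>x\<in>closure \<Omega>. norm (\<chi> i. nv x $ i) \<le> B" using ub[OF cpt] by blast
    then show ?thesis using that[of B] by simp
  qed
  obtain Bd where Bd: "\<And>x. x \<in> closure \<Omega> \<Longrightarrow> norm (\<chi> p l. pd p (\<lambda>y. nv y $ l) x) \<le> Bd"
  proof -
    have "continuous_on (closure \<Omega>) (\<lambda>x. \<chi> p l. pd p (\<lambda>y. nv y $ l) x)"
      by (intro continuous_on_vec_lambda smooth_fun_cont smooth_fun_pd nvsm)
    then obtain B where "\<forall>x\<in>closure \<Omega>. norm (\<chi> p l. pd p (\<lambda>y. nv y $ l) x) \<le> B" using ub[OF cpt] by blast
    then show ?thesis using that[of B] by simp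
  qed
  define K1 where "K1 = (324 + 11664 * Bn^2 * Bd^2) / c^2"
  have K1: "0 \<le> K1" unfolding K1_def by (intro divide_nonneg_nonneg) auto
  show "\<exists>C. \<forall>\<Theta>. smooth_fun \<Theta> \<longrightarrow>
           sob_norm j \<Omega> \<Theta> \<le> C * (
               sob_norm (j - 1) \<Omega> \<Theta>
             + fam_norm 0 \<Omega> (\<lambda>is. dpar is (Aop V0 Vs \<Theta>)) {is. length is = j - 2}
             + fam_norm 0 \<Omega> (\<lambda>is x. Aop V0 Vs (dpar is \<Theta>) x - dpar is (Aop V0 Vs \<Theta>) x)
                 {is. length is = j - 2}
             + fam_norm 1 \<Omega> (\<lambda>(i, is) x. tan_d nv i (dpar is \<Theta>) x - dpar is (tan_d nv i \<Theta>) x)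
                 (UNIV \<times> {is. length is = j - 2})
             + fam_norm (j - 1) \<Omega> (\<lambda>i. tan_d nv i \<Theta>) UNIV)"
  proof (intro exI[of _ "sqrt (1 + 2 * K1)"] allI impI)
    fix \<Theta> :: "real^3 \<Rightarrow> real"
    assume Th: "smooth_fun \<Theta>"
    have ThR: "\<Theta> \<in> Rg V0 U" by (rule Rg.sm[OF smooth_on_fun[OF Th]])
    define T where "T i = tan_d nv i \<Theta>" for i
    define cm where "cm i is = (\<lambda>x. tan_d nv i (dpar is \<Theta>) x - dpar is (tan_d nv i \<Theta>) x)" for i "is"
    define X where "X is = dpar is (Aop V0 Vs \<Theta>)" for "is"
    define Y where "Y is = (\<lambda>x. Aop V0 Vs (dpar is \<Theta>) x - dpar is (Aop V0 Vs \<Theta>) x)" for "is"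
    have TR: "\<And>i. T i \<in> Rg V0 U" unfolding T_def by (rule tanR[OF ThR])
    have cmR: "\<And>i is. cm i is \<in> Rg V0 U" unfolding cm_def by (intro Rg_diff tanR dR ThR)
    have XR: "\<And>is. X is \<in> Rg V0 U" unfolding X_def by (intro dR AopR ThR)
    have YR: "\<And>is. Y is \<in> Rg V0 U" unfolding Y_def by (intro Rg_diff AopR dR ThR)
    let ?L = "{is :: 3 list. length is = k}"
    have PW: "(\<Sum>p\<in>UNIV. \<Sum>q\<in>UNIV. (dpar (p # q # is) \<Theta> x)^2)
        \<le> K1 * (2 * (\<Sum>p\<in>UNIV. \<Sum>i\<in>UNIV. (dpar (p # is) (T i) x)^2)
              + 2 * (\<Sum>p\<in>UNIV. \<Sum>i\<in>UNIV. (dpar [p] (cm i is) x)^2)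
              + (\<Sum>l\<in>UNIV. (dpar (l # is) \<Theta> x)^2) + 2 * (X is x)^2 + 2 * (Y is x)^2)"
      if x: "x \<in> \<Omega>" for "is" x
    proof -
      have xc: "x \<in> closure \<Omega>" using x closure_subset by blast
      have xU: "x \<in> U" using xc clU by blast
      define D where "D = dpar is \<Theta>"
      have Ds: "smooth_on U D" unfolding D_def by (rule RS[OF dR[OF ThR]])
      have nvs: "\<And>l. smooth_on U (\<lambda>y. nv y $ l)" by (rule smooth_on_fun[OF nvsm])
      note P0 = pointwise[OF Uo xU Ds nvs c(1) c(2) c(3)[OF xc] Bn[OF xc] Bd[OF xc]]
      have Aeq: "(\<Sum>i\<in>UNIV. \<Sum>j\<in>UNIV. ((if i = j then 1 else 0) - w x $ i * w x $ j) * dpar [i, j] D x)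
          = X is x + Y is x"
        by (simp add: w_def X_def Y_def Aop_def abar_def D_def)
      have Ee: "(pd p (tan_d nv i D) x)^2 \<le> 2 * (dpar (p # is) (T i) x)^2 + 2 * (dpar [p] (cm i is) x)^2" for p i
      proof -
        have "tan_d nv i D = (\<lambda>y. dpar is (T i) y + cm i is y)"
          by (rule ext) (simp add: cm_def T_def D_def)
        moreover have "pd p (\<lambda>y. dpar is (T i) y + cm i is y) x = pd p (dpar is (T i)) x + pd p (cm i is) x"
          by (rule pd_add) (use smooth_on_diff[OF RS[OF dR[OF TR]] xU] smooth_on_diff[OF RS[OF cmR] xU] in auto)
        ultimately have "pd p (tan_d nv i D) x = dpar (p # is) (T i) x + dpar [p] (cm i is) x" by simp
        then show ?thesis using sq_sum2 by simp
      qed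
      have Es: "(\<Sum>p\<in>UNIV. \<Sum>i\<in>UNIV. (pd p (tan_d nv i D) x)^2)
          \<le> 2 * (\<Sum>p\<in>UNIV. \<Sum>i\<in>UNIV. (dpar (p # is) (T i) x)^2)
            + 2 * (\<Sum>p\<in>UNIV. \<Sum>i\<in>UNIV. (dpar [p] (cm i is) x)^2)"
      proof -
        have "(\<Sum>p\<in>UNIV. \<Sum>i\<in>UNIV. (pd p (tan_d nv i D) x)^2)
            \<le> (\<Sum>p\<in>UNIV. \<Sum>i\<in>UNIV. 2 * (dpar (p # is) (T i) x)^2 + 2 * (dpar [p] (cm i is) x)^2)"
          by (intro sum_mono Ee)
        also have "\<dots> = 2 * (\<Sum>p\<in>UNIV. \<Sum>i\<in>UNIV. (dpar (p # is) (T i) x)^2)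
            + 2 * (\<Sum>p\<in>UNIV. \<Sum>i\<in>UNIV. (dpar [p] (cm i is) x)^2)"
          by (simp add: sum.distrib sum_distrib_left)
        finally show ?thesis .
      qed
      have As: "(X is x + Y is x)^2 \<le> 2 * (X is x)^2 + 2 * (Y is x)^2" by (rule sq_sum2)
      have lhs: "(\<Sum>p\<in>UNIV. \<Sum>q\<in>UNIV. (dpar (p # q # is) \<Theta> x)^2) = (\<Sum>p\<in>UNIV. \<Sum>q\<in>UNIV. (pd p (pd q D) x)^2)"
        by (simp add: D_def)
      have mid: "(\<Sum>l\<in>UNIV. (pd l D x)^2) = (\<Sum>l\<in>UNIV. (dpar (l # is) \<Theta> x)^2)"
        by (simp add: D_def)
      have "(\<Sum>p\<in>UNIV. \<Sum>q\<in>UNIV. (dpar (p # q # is) \<Theta> x)^2)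
          \<le> K1 * ((\<Sum>p\<in>UNIV. \<Sum>i\<in>UNIV. (pd p (tan_d nv i D) x)^2) + (\<Sum>l\<in>UNIV. (dpar (l # is) \<Theta> x)^2)
             + (X is x + Y is x)^2)"
        using P0 unfolding lhs mid Aeq K1_def .
      also have "\<dots> \<le> K1 * (2 * (\<Sum>p\<in>UNIV. \<Sum>i\<in>UNIV. (dpar (p # is) (T i) x)^2)
              + 2 * (\<Sum>p\<in>UNIV. \<Sum>i\<in>UNIV. (dpar [p] (cm i is) x)^2)
              + (\<Sum>l\<in>UNIV. (dpar (l # is) \<Theta> x)^2) + 2 * (X is x)^2 + 2 * (Y is x)^2)"
        using Es As K1 by (intro mult_left_mono) auto
      finally show ?thesis .
    qed
    show "sob_norm j \<Omega> \<Theta> \<le> sqrt (1 + 2 * K1) * (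
               sob_norm (j - 1) \<Omega> \<Theta>
             + fam_norm 0 \<Omega> (\<lambda>is. dpar is (Aop V0 Vs \<Theta>)) {is. length is = j - 2}
             + fam_norm 0 \<Omega> (\<lambda>is x. Aop V0 Vs (dpar is \<Theta>) x - dpar is (Aop V0 Vs \<Theta>) x)
                 {is. length is = j - 2}
             + fam_norm 1 \<Omega> (\<lambda>(i, is) x. tan_d nv i (dpar is \<Theta>) x - dpar is (tan_d nv i \<Theta>) x)
                 (UNIV \<times> {is. length is = j - 2})
             + fam_norm (j - 1) \<Omega> (\<lambda>i. tan_d nv i \<Theta>) UNIV)"
    proof -
      have HIR: "\<And>h. h \<in> Rg V0 U \<Longrightarrow> ((\<lambda>x. (h x)^2) has_integral Isq \<Omega> h) \<Omega>"
        using HI[OF Om clU] RS by blast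
      have INT: "(\<Sum>p\<in>UNIV. \<Sum>q\<in>UNIV. Isq \<Omega> (dpar (p # q # is) \<Theta>))
        \<le> K1 * (2 * (\<Sum>p\<in>UNIV. \<Sum>i\<in>UNIV. Isq \<Omega> (dpar (p # is) (T i)))
              + 2 * (\<Sum>p\<in>UNIV. \<Sum>i\<in>UNIV. Isq \<Omega> (dpar [p] (cm i is)))
              + (\<Sum>l\<in>UNIV. Isq \<Omega> (dpar (l # is) \<Theta>)) + 2 * Isq \<Omega> (X is) + 2 * Isq \<Omega> (Y is))" for "is"
      proof (rule has_integral_le[OF _ _ PW])
        show "((\<lambda>x. \<Sum>p\<in>UNIV. \<Sum>q\<in>UNIV. (dpar (p # q # is) \<Theta> x)^2) has_integral
            (\<Sum>p\<in>UNIV. \<Sum>q\<in>UNIV. Isq \<Omega> (dpar (p # q # is) \<Theta>))) \<Omega>"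
          by (intro has_integral_sum HIR dR ThR) auto
        show "((\<lambda>x. K1 * (2 * (\<Sum>p\<in>UNIV. \<Sum>i\<in>UNIV. (dpar (p # is) (T i) x)^2)
              + 2 * (\<Sum>p\<in>UNIV. \<Sum>i\<in>UNIV. (dpar [p] (cm i is) x)^2)
              + (\<Sum>l\<in>UNIV. (dpar (l # is) \<Theta> x)^2) + 2 * (X is x)^2 + 2 * (Y is x)^2)) has_integral
            K1 * (2 * (\<Sum>p\<in>UNIV. \<Sum>i\<in>UNIV. Isq \<Omega> (dpar (p # is) (T i)))
              + 2 * (\<Sum>p\<in>UNIV. \<Sum>i\<in>UNIV. Isq \<Omega> (dpar [p] (cm i is)))
              + (\<Sum>l\<in>UNIV. Isq \<Omega> (dpar (l # is) \<Theta>)) + 2 * Isq \<Omega> (X is) + 2 * Isq \<Omega> (Y is))) \<Omega>"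
          by (intro has_integral_mult_right has_integral_add has_integral_sum HIR dR ThR TR cmR XR YR) auto
      qed (simp)
      define S1 where "S1 = sob_norm (j - 1) \<Omega> \<Theta>"
      define F1 where "F1 = fam_norm 0 \<Omega> (\<lambda>is. dpar is (Aop V0 Vs \<Theta>)) {is. length is = j - 2}"
      define F2 where "F2 = fam_norm 0 \<Omega> (\<lambda>is x. Aop V0 Vs (dpar is \<Theta>) x - dpar is (Aop V0 Vs \<Theta>) x)
                 {is. length is = j - 2}"
      define F3 where "F3 = fam_norm 1 \<Omega> (\<lambda>(i, is) x. tan_d nv i (dpar is \<Theta>) x - dpar is (tan_d nv i \<Theta>) x)
                 (UNIV \<times> {is. length is = j - 2})"
      define F4 where "F4 = fam_norm (j - 1) \<Omega> (\<lambda>i. tan_d nv i \<Theta>) UNIV"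
      have kk: "j - 2 = k" by (simp add: k_def)
      have F1sq: "F1^2 = (\<Sum>is\<in>?L. Isq \<Omega> (X is))"
        unfolding F1_def fam_sq kk sob0_sq X_def ..
      have F2sq: "F2^2 = (\<Sum>is\<in>?L. Isq \<Omega> (Y is))"
        unfolding F2_def fam_sq kk sob0_sq Y_def ..
      have F3sq: "(\<Sum>i\<in>UNIV. \<Sum>is\<in>?L. \<Sum>p\<in>UNIV. Isq \<Omega> (dpar [p] (cm i is))) \<le> F3^2"
      proof -
        have "(\<Sum>i\<in>UNIV. \<Sum>is\<in>?L. \<Sum>p\<in>UNIV. Isq \<Omega> (dpar [p] (cm i is)))
            \<le> (\<Sum>i\<in>UNIV. \<Sum>is\<in>?L. (sob_norm 1 \<Omega> (cm i is))^2)"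
          by (intro sum_mono lev1)
        also have "\<dots> = (\<Sum>a\<in>UNIV \<times> ?L. (sob_norm 1 \<Omega> (cm (fst a) (snd a)))^2)"
          by (simp add: sum.cartesian_product case_prod_beta')
        also have "\<dots> = F3^2"
          unfolding F3_def fam_sq kk by (intro sum.cong refl) (auto simp: cm_def case_prod_beta')
        finally show ?thesis .
      qed
      have F4sq: "(\<Sum>i\<in>UNIV. \<Sum>p\<in>UNIV. \<Sum>is\<in>?L. Isq \<Omega> (dpar (p # is) (T i))) \<le> F4^2"
      proof -
        have "(\<Sum>i\<in>UNIV. \<Sum>p\<in>UNIV. \<Sum>is\<in>?L. Isq \<Omega> (dpar (p # is) (T i)))
            = (\<Sum>i\<in>UNIV. \<Sum>L\<in>{L::3 list. length L = Suc k}. Isq \<Omega> (dpar L (T i)))"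
          by (simp add: sum_len_Suc)
        also have "\<dots> \<le> (\<Sum>i\<in>UNIV. (sob_norm (Suc k) \<Omega> (T i))^2)"
          by (intro sum_mono sob_level_le) simp
        also have "\<dots> = F4^2" unfolding F4_def fam_sq j1 T_def ..
        finally show ?thesis .
      qed
      have S1sq: "(\<Sum>l\<in>UNIV. \<Sum>is\<in>?L. Isq \<Omega> (dpar (l # is) \<Theta>)) \<le> S1^2"
      proof -
        have "(\<Sum>l\<in>UNIV. \<Sum>is\<in>?L. Isq \<Omega> (dpar (l # is) \<Theta>))
            = (\<Sum>L\<in>{L::3 list. length L = Suc k}. Isq \<Omega> (dpar L \<Theta>))"
          by (simp add: sum_len_Suc)
        also have "\<dots> \<le> S1^2" unfolding S1_def j1 by (rule sob_level_le) simp
        finally show ?thesis .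
      qed
      have top: "(sob_norm j \<Omega> \<Theta>)^2 = S1^2 + (\<Sum>is\<in>?L. \<Sum>p\<in>UNIV. \<Sum>q\<in>UNIV. Isq \<Omega> (dpar (p # q # is) \<Theta>))"
      proof -
        have "(sob_norm j \<Omega> \<Theta>)^2 = S1^2 + (\<Sum>L\<in>{L::3 list. length L = Suc (Suc k)}. Isq \<Omega> (dpar L \<Theta>))"
          using sob_split[of "Suc k" \<Omega> \<Theta>] by (simp add: S1_def jk)
        also have "(\<Sum>L\<in>{L::3 list. length L = Suc (Suc k)}. Isq \<Omega> (dpar L \<Theta>))
            = (\<Sum>p\<in>UNIV. \<Sum>q\<in>UNIV. \<Sum>is\<in>?L. Isq \<Omega> (dpar (p # q # is) \<Theta>))"
          by (simp add: sum_len_Suc)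
        also have "\<dots> = (\<Sum>is\<in>?L. \<Sum>p\<in>UNIV. \<Sum>q\<in>UNIV. Isq \<Omega> (dpar (p # q # is) \<Theta>))"
          by (rule swap3[symmetric])
        finally show ?thesis .
      qed
      have SUM: "(\<Sum>is\<in>?L. \<Sum>p\<in>UNIV. \<Sum>q\<in>UNIV. Isq \<Omega> (dpar (p # q # is) \<Theta>))
        \<le> K1 * (2 * (\<Sum>is\<in>?L. \<Sum>p\<in>UNIV. \<Sum>i\<in>UNIV. Isq \<Omega> (dpar (p # is) (T i)))
              + 2 * (\<Sum>is\<in>?L. \<Sum>p\<in>UNIV. \<Sum>i\<in>UNIV. Isq \<Omega> (dpar [p] (cm i is)))
              + (\<Sum>is\<in>?L. \<Sum>l\<in>UNIV. Isq \<Omega> (dpar (l # is) \<Theta>))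
              + 2 * (\<Sum>is\<in>?L. Isq \<Omega> (X is)) + 2 * (\<Sum>is\<in>?L. Isq \<Omega> (Y is)))"
        unfolding sum_lin5[symmetric] by (rule sum_mono[OF INT])
      have A1: "(\<Sum>is\<in>?L. \<Sum>p\<in>UNIV. \<Sum>i\<in>UNIV. Isq \<Omega> (dpar (p # is) (T i))) \<le> F4^2"
        using F4sq unfolding swap3r[of "\<lambda>is p i. Isq \<Omega> (dpar (p # is) (T i))"] .
      have A2: "(\<Sum>is\<in>?L. \<Sum>p\<in>UNIV. \<Sum>i\<in>UNIV. Isq \<Omega> (dpar [p] (cm i is))) \<le> F3^2"
        using F3sq unfolding swap3c[of "\<lambda>is p i. Isq \<Omega> (dpar [p] (cm i is))"] .
      have A3: "(\<Sum>is\<in>?L. \<Sum>l\<in>UNIV. Isq \<Omega> (dpar (l # is) \<Theta>)) \<le> S1^2"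
        by (subst sum.swap) (rule S1sq)
      have nn: "0 \<le> S1" "0 \<le> F1" "0 \<le> F2" "0 \<le> F3" "0 \<le> F4"
        unfolding S1_def F1_def F2_def F3_def F4_def by (simp_all add: sob_nonneg fam_nonneg)
      define Q where "Q = S1^2 + F1^2 + F2^2 + F3^2 + F4^2"
      define P where "P = S1 + F1 + F2 + F3 + F4"
      have "(sob_norm j \<Omega> \<Theta>)^2 \<le> S1^2 + K1 * (2 * F4^2 + 2 * F3^2 + S1^2 + 2 * F1^2 + 2 * F2^2)"
      proof -
        have "K1 * (2 * (\<Sum>is\<in>?L. \<Sum>p\<in>UNIV. \<Sum>i\<in>UNIV. Isq \<Omega> (dpar (p # is) (T i)))
              + 2 * (\<Sum>is\<in>?L. \<Sum>p\<in>UNIV. \<Sum>i\<in>UNIV. Isq \<Omega> (dpar [p] (cm i is)))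
              + (\<Sum>is\<in>?L. \<Sum>l\<in>UNIV. Isq \<Omega> (dpar (l # is) \<Theta>))
              + 2 * (\<Sum>is\<in>?L. Isq \<Omega> (X is)) + 2 * (\<Sum>is\<in>?L. Isq \<Omega> (Y is)))
          \<le> K1 * (2 * F4^2 + 2 * F3^2 + S1^2 + 2 * F1^2 + 2 * F2^2)"
          using A1 A2 A3 F1sq F2sq K1 by (intro mult_left_mono) auto
        then show ?thesis using top SUM by linarith
      qed
      also have "\<dots> \<le> (1 + 2 * K1) * Q"
      proof -
        have "0 \<le> K1 * S1^2" using K1 by simp
        then have "K1 * (2 * F4^2 + 2 * F3^2 + S1^2 + 2 * F1^2 + 2 * F2^2) \<le> 2 * K1 * Q"
          unfolding Q_def by (simp add: algebra_simps)
        moreover have "S1^2 \<le> Q" unfolding Q_def by simp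
        ultimately show ?thesis by (simp add: algebra_simps)
      qed
      also have "\<dots> \<le> (1 + 2 * K1) * P^2"
        unfolding Q_def P_def using K1 sq_le_sum5[OF nn] by (intro mult_left_mono) auto
      finally have fin: "(sob_norm j \<Omega> \<Theta>)^2 \<le> (1 + 2 * K1) * P^2" .
      have "sob_norm j \<Omega> \<Theta> = sqrt ((sob_norm j \<Omega> \<Theta>)^2)" using sob_nonneg by simp
      also have "\<dots> \<le> sqrt ((1 + 2 * K1) * P^2)" using fin by (rule real_sqrt_le_mono)
      also have "\<dots> = sqrt (1 + 2 * K1) * P" using nn by (simp add: real_sqrt_mult P_def)
      finally show ?thesis unfolding P_def S1_def F1_def F2_def F3_def F4_def .
    qed
  qed
qed


end
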